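(* Let $a<b$ and let $X(t),Y(t)$, $t\in[a,b]$, be stochastic processes (on a common probability space) with continuous sample paths, and assume that $Y$ has $C^1[a,b]$ sample paths. For $n\ge1$ and $p\ge1$ put $\mathsf{V}^p_n(Z;[a,b])=\sum_{j=1}^n|Z(t_j)-Z(t_{j-1})|^p$, where $t_j=a+(b-a)j/n$, $j=0,\dots,n$. \begin{enumerate} \item If there exists $p>1$ such that the almost sure limit $\mathsf{V}^p(X;[a,b]):=\lim_{n\to\infty}\mathsf{V}^p_n(X;[a,b])$ exists and satisfies $0<\mathsf{V}^p(X;[a,b])<\infty$, then $\lim_{n\to\infty}\mathsf{V}^p_n(X+Y;[a,b])$ exists almost surely and $\mathsf{V}^p(X+Y;[a,b])=\mathsf{V}^p(X;[a,b])$. \item Similarly, if for some $p>1$ the limit in probability $\mathsf{V}^p_{\mathbb{P}}(X;[a,b]):=\mathbb{P}\text{-}\lim_{n\to\infty}\mathsf{V}^p_n(X;[a,b])$ exists and satisfies $0<\mathsf{V}^p_{\mathbb{P}}(X;[a,b])<\infty$, then $\mathsf{V}^p_{\mathbb{P}}(X+Y;[a,b])=\mathsf{V}^p_{\mathbb{P}}(X;[a,b])$ (in particular the limit in probability for $X+Y$ exists). \item If in addition to the hypothesis of item 1 there exist $\alpha,\sigma_0>0$ with $\alpha+1/p<1$ such that $n^\alpha\big(\mathsf{V}^p_n(X;[a,b])-\mathsf{V}^p(X;[a,b])\big)\to\mathcal{N}(0,\sigma_0^2)$ in distribution as $n\to\infty$, then also $n^\alpha\big(\mathsf{V}^p_n(X+Y;[a,b])-\mathsf{V}^p(X;[a,b])\big)\to\mathcal{N}(0,\sigma_0^2)$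 in distribution. \item Moreover, if $Y$ has $C^2[a,b]$ sample paths and the convergence in distribution of item 3 holds with $p=2$ and $\alpha=1/2$ (with $0<\mathsf{V}^2(X;[a,b])<\infty$), then the conclusion of item 3 holds as well with $p=2$, $\alpha=1/2$. \end{enumerate}
   Context: $\mathcal{N}(0,\sigma_0^2)$ denotes the centered normal law with variance $\sigma_0^2$. *)

theory Defs
  imports "HOL-Probability.Probability"
begin

definition pvar_n :: "real \<Rightarrow> (real \<Rightarrow> real) \<Rightarrow> real \<Rightarrow> real \<Rightarrow> nat \<Rightarrow> real" where
  "pvar_n p Z a b n =
     (\<Sum>j\<in>{1..n}. \<bar>Z (a + (b - a) * real j / real n) - Z (a + (b - a) * real (j - 1) / real n)\<bar> powr p)"

definition C1_on :: "real \<Rightarrow> real \<Rightarrow> (real \<Rightarrow> real) \<Rightarrow> bool" where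
  "C1_on a b f \<longleftrightarrow> (\<exists>f'. continuous_on {a..b} f' \<and>
      (\<forall>t\<in>{a..b}. (f has_real_derivative f' t) (at t within {a..b})))"

definition C2_on :: "real \<Rightarrow> real \<Rightarrow> (real \<Rightarrow> real) \<Rightarrow> bool" where
  "C2_on a b f \<longleftrightarrow> (\<exists>f' f''. continuous_on {a..b} f'' \<and>
      (\<forall>t\<in>{a..b}. (f has_real_derivative f' t) (at t within {a..b})) \<and>
      (\<forall>t\<in>{a..b}. (f' has_real_derivative f'' t) (at t within {a..b})))"

definition conv_in_prob :: "'a measure \<Rightarrow> (nat \<Rightarrow> 'a \<Rightarrow> real) \<Rightarrow> ('a \<Rightarrow> real) \<Rightarrow> bool" where
  "conv_in_prob M Z L \<longleftrightarrow>
     (\<forall>e>0. (\<lambda>n. measure M {\<omega>\<in>space M. e < \<bar>Z n \<omega> - L \<omega>\<bar>}) \<longlonglongrightarrow> 0)"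

end

theory Submission
  imports Defs
begin

lemma ae_evt_not_in_measure:
  assumes P: "prob_space M" and F: "\<And>n. F n \<in> sets M"
    and ev: "AE \<omega> in M. eventually (\<lambda>n. \<omega> \<notin> F n) sequentially"
  shows "(\<lambda>n. measure M (F n)) \<longlonglongrightarrow> 0"
proof -
  interpret prob_space M by fact
  have "(\<lambda>n. integral\<^sup>L M (indicator (F n) :: _ \<Rightarrow> real)) \<longlonglongrightarrow> integral\<^sup>L M (\<lambda>_. 0::real)"
  proof (rule integral_dominated_convergence[where w="\<lambda>_. 1"])
    show "AE x in M. (\<lambda>i. indicator (F i) x :: real) \<longlonglongrightarrow> 0"
      using ev
    proof (rule AE_mp, intro AE_I2 impI)
      fix x assume "eventually (\<lambda>n. x \<notin> F n) sequentially"
      then have "eventually (\<lambda>n. indicator (F n) x = (0::real)) sequentially"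
        by (rule eventually_mono) auto
      then show "(\<lambda>i. indicator (F i) x :: real) \<longlonglongrightarrow> 0"
        by (rule tendsto_eventually)
    qed
  qed (auto intro: borel_measurable_indicator F)
  then show ?thesis using F by simp
qed

lemma ae_tendsto_meas:
  fixes D :: "nat \<Rightarrow> 'a \<Rightarrow> real"
  assumes P: "prob_space M" and D: "\<And>n. D n \<in> borel_measurable M"
    and ae: "AE \<omega> in M. (\<lambda>n. D n \<omega>) \<longlonglongrightarrow> 0" and d: "d > 0"
  shows "(\<lambda>n. measure M {\<omega>\<in>space M. d \<le> \<bar>D n \<omega>\<bar>}) \<longlonglongrightarrow> 0"
proof (rule ae_evt_not_in_measure[OF P])
  show "{\<omega>\<in>space M. d \<le> \<bar>D n \<omega>\<bar>} \<in> sets M" for n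
  proof -
    note D[measurable]
    show ?thesis by measurable
  qed
  show "AE \<omega> in M. eventually (\<lambda>n. \<omega> \<notin> {\<omega>\<in>space M. d \<le> \<bar>D n \<omega>\<bar>}) sequentially"
    using ae
  proof (rule AE_mp, intro AE_I2 impI)
    fix x assume "(\<lambda>n. D n x) \<longlonglongrightarrow> 0"
    then have "eventually (\<lambda>n. dist (D n x) 0 < d) sequentially" using d by (rule tendstoD)
    then show "eventually (\<lambda>n. x \<notin> {\<omega>\<in>space M. d \<le> \<bar>D n \<omega>\<bar>}) sequentially"
      by (rule eventually_mono) auto
  qed
qed

lemma meas_le2:
  assumes "prob_space M" "A \<subseteq> B \<union> C" "B \<in> sets M" "C \<in> sets M"
  shows "measure M A \<le> measure M B + measure M C"
proof -
  interpret prob_space M by fact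
  have "measure M A \<le> measure M (B \<union> C)"
    using assms by (intro finite_measure_mono) auto
  also have "\<dots> \<le> measure M B + measure M C" using assms by (intro measure_Un_le)
  finally show ?thesis .
qed

lemma cdf_distr_eq:
  fixes Z :: "'a \<Rightarrow> real"
  assumes "Z \<in> borel_measurable M"
  shows "cdf (distr M borel Z) x = measure M {\<omega>\<in>space M. Z \<omega> \<le> x}"
  using assms by (simp add: cdf_def2 measure_distr vimage_def Int_def conj_commute)

lemma slutsky:
  fixes Z W :: "nat \<Rightarrow> 'a \<Rightarrow> real"
  assumes P: "prob_space M" and Z: "\<And>n. Z n \<in> borel_measurable M"
    and W: "\<And>n. W n \<in> borel_measurable M"
    and cont: "\<And>x. isCont (cdf N) x"
    and wc: "weak_conv_m (\<lambda>n. distr M borel (Z n)) N"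
    and ae: "AE \<omega> in M. (\<lambda>n. W n \<omega> - Z n \<omega>) \<longlonglongrightarrow> 0"
  shows "weak_conv_m (\<lambda>n. distr M borel (W n)) N"
  unfolding weak_conv_m_def weak_conv_def
proof (intro allI impI)
  fix x assume "isCont (cdf N) x"
  define FZ where "FZ n y = measure M {\<omega>\<in>space M. Z n \<omega> \<le> y}" for n y
  define FW where "FW n y = measure M {\<omega>\<in>space M. W n \<omega> \<le> y}" for n y
  define G where "G n d = measure M {\<omega>\<in>space M. d \<le> \<bar>W n \<omega> - Z n \<omega>\<bar>}" for n d
  note Z[measurable] W[measurable]
  have cZ: "cdf (distr M borel (Z n)) y = FZ n y" for n y
    unfolding FZ_def by (rule cdf_distr_eq) simp
  have cW: "cdf (distr M borel (W n)) y = FW n y" for n y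
    unfolding FW_def by (rule cdf_distr_eq) simp
  have FZc: "(\<lambda>n. FZ n y) \<longlonglongrightarrow> cdf N y" for y
    using wc cont[of y] unfolding weak_conv_m_def weak_conv_def cZ by blast
  have Gc: "(\<lambda>n. G n d) \<longlonglongrightarrow> 0" if "d > 0" for d
    unfolding G_def by (rule ae_tendsto_meas[OF P _ ae that]) simp
  have up: "FW n x \<le> FZ n (x + d) + G n d" for n d
    unfolding FW_def FZ_def G_def by (rule meas_le2[OF P]) auto
  have lo: "FZ n (x - d) \<le> FW n x + G n d" for n d
    unfolding FW_def FZ_def G_def by (rule meas_le2[OF P]) auto
  show "(\<lambda>n. cdf (distr M borel (W n)) x) \<longlonglongrightarrow> cdf N x"
    unfolding cW
  proof (rule tendstoI)
    fix e :: real assume e: "e > 0"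
    from cont[of x] have "cdf N \<midarrow>x\<rightarrow> cdf N x" by (simp add: isCont_def)
    then obtain s where s: "s > 0" and hs: "\<And>y. y \<noteq> x \<and> norm (y - x) < s \<Longrightarrow> norm (cdf N y - cdf N x) < e/3"
      using e unfolding LIM_eq by (meson divide_pos_pos zero_less_numeral)
    define d where "d = s/2"
    have d: "d > 0" using s by (simp add: d_def)
    have h1: "\<bar>cdf N (x+d) - cdf N x\<bar> < e/3" using hs[of "x+d"] s d by (simp add: d_def)
    have h2: "\<bar>cdf N (x-d) - cdf N x\<bar> < e/3" using hs[of "x-d"] s d by (simp add: d_def)
    have "eventually (\<lambda>n. dist (FZ n (x+d)) (cdf N (x+d)) < e/3) sequentially"
      using FZc e by (intro tendstoD) auto
    moreover have "eventually (\<lambda>n. dist (FZ n (x-d)) (cdf N (x-d)) < e/3) sequentially"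
      using FZc e by (intro tendstoD) auto
    moreover have "eventually (\<lambda>n. dist (G n d) 0 < e/3) sequentially"
      using Gc[OF d] e by (intro tendstoD) auto
    ultimately show "eventually (\<lambda>n. dist (FW n x) (cdf N x) < e) sequentially"
    proof eventually_elim
      case (elim n)
      show ?case using elim up[of n d] lo[of n d] h1 h2
        unfolding dist_real_def by arith
    qed
  qed
qed

lemma tail_small:
  fixes V :: "'a \<Rightarrow> real"
  assumes P: "prob_space M" and V: "V \<in> borel_measurable M" and eta: "\<eta> > 0"
  shows "\<exists>R. measure M {\<omega>\<in>space M. R < \<bar>V \<omega>\<bar>} < \<eta>"
proof -
  interpret prob_space M by fact
  note V[measurable]
  define A where "A k = {\<omega>\<in>space M. real k < \<bar>V \<omega>\<bar>}" for k :: nat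
  have "range A \<subseteq> sets M" unfolding A_def by auto
  moreover have "decseq A" unfolding A_def decseq_def by auto
  ultimately have "(\<lambda>k. measure M (A k)) \<longlonglongrightarrow> measure M (\<Inter>i. A i)"
    by (rule finite_Lim_measure_decseq)
  moreover have "(\<Inter>i. A i) = {}"
  proof safe
    fix x assume "x \<in> (\<Inter>i. A i)"
    moreover obtain k :: nat where "\<bar>V x\<bar> < real k" using reals_Archimedean2 by blast
    ultimately show "x \<in> {}" unfolding A_def by (auto dest!: spec[of _ k])
  qed
  ultimately have "(\<lambda>k. measure M (A k)) \<longlonglongrightarrow> 0" by simp
  then have "eventually (\<lambda>k. dist (measure M (A k)) 0 < \<eta>) sequentially"
    using eta by (rule tendstoD)
  then obtain k where "dist (measure M (A k)) 0 < \<eta>" by (auto simp: eventually_sequentially)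
  then show ?thesis unfolding A_def by (intro exI[of _ "real k"]) simp
qed

lemma inprob_perturb:
  fixes Z W :: "nat \<Rightarrow> 'a \<Rightarrow> real" and V :: "'a \<Rightarrow> real"
  assumes P: "prob_space M" and Z: "\<And>n. Z n \<in> borel_measurable M"
    and W: "\<And>n. W n \<in> borel_measurable M" and V: "V \<in> borel_measurable M"
    and cp: "conv_in_prob M Z V"
    and det: "\<And>\<omega> e R. \<omega> \<in> space M \<Longrightarrow> e > 0 \<Longrightarrow>
         eventually (\<lambda>n. \<bar>Z n \<omega>\<bar> \<le> R \<longrightarrow> \<bar>W n \<omega> - Z n \<omega>\<bar> \<le> e) sequentially"
  shows "conv_in_prob M W V"
  unfolding conv_in_prob_def
proof (intro allI impI)
  fix e :: real assume e: "e > 0"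
  note Z[measurable] W[measurable] V[measurable]
  show "(\<lambda>n. measure M {\<omega>\<in>space M. e < \<bar>W n \<omega> - V \<omega>\<bar>}) \<longlonglongrightarrow> 0"
  proof (rule tendstoI)
    fix \<eta> :: real assume eta: "\<eta> > 0"
    obtain R where R: "measure M {\<omega>\<in>space M. R < \<bar>V \<omega>\<bar>} < \<eta>/3"
      using tail_small[OF P V, of "\<eta>/3"] eta by auto
    define F where "F n = {\<omega>\<in>space M. e/2 < \<bar>W n \<omega> - Z n \<omega>\<bar> \<and> \<bar>Z n \<omega>\<bar> \<le> R + e}" for n
    define A where "A n = {\<omega>\<in>space M. e/2 < \<bar>Z n \<omega> - V \<omega>\<bar>}" for n
    have Fs: "F n \<in> sets M" for n unfolding F_def by measurable
    have As: "A n \<in> sets M" for n unfolding A_def by measurable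
    have "(\<lambda>n. measure M (F n)) \<longlonglongrightarrow> 0"
    proof (rule ae_evt_not_in_measure[OF P Fs], intro AE_I2)
      fix \<omega> assume "\<omega> \<in> space M"
      from det[OF this, of "e/2" "R + e"] e have "eventually (\<lambda>n. \<bar>Z n \<omega>\<bar> \<le> R + e \<longrightarrow> \<bar>W n \<omega> - Z n \<omega>\<bar> \<le> e / 2) sequentially" by simp
      then show "eventually (\<lambda>n. \<omega> \<notin> F n) sequentially"
        by (elim eventually_mono) (auto simp: F_def)
    qed
    then have ev1: "eventually (\<lambda>n. dist (measure M (F n)) 0 < \<eta>/3) sequentially"
      using eta by (intro tendstoD) auto
    have "(\<lambda>n. measure M (A n)) \<longlonglongrightarrow> 0" using cp e half_gt_zero[OF e] unfolding conv_in_prob_def A_def by blast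
    then have ev2: "eventually (\<lambda>n. dist (measure M (A n)) 0 < \<eta>/3) sequentially"
      using eta by (intro tendstoD) auto
    show "eventually (\<lambda>n. dist (measure M {\<omega>\<in>space M. e < \<bar>W n \<omega> - V \<omega>\<bar>}) 0 < \<eta>) sequentially"
      using ev1 ev2
    proof eventually_elim
      case (elim n)
      have "measure M {\<omega>\<in>space M. e < \<bar>W n \<omega> - V \<omega>\<bar>}
          \<le> measure M (A n \<union> F n) + measure M {\<omega>\<in>space M. R < \<bar>V \<omega>\<bar>}"
        apply (rule meas_le2[OF P])
        apply (auto simp: A_def F_def intro!: As Fs)
        by (smt (verit))+
      also have "\<dots> \<le> measure M (A n) + measure M (F n) + measure M {\<omega>\<in>space M. R < \<bar>V \<omega>\<bar>}"
        using meas_le2[OF P _ As Fs, of "A n \<union> F n"] by simp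
      finally have "measure M {\<omega>\<in>space M. e < \<bar>W n \<omega> - V \<omega>\<bar>} < \<eta>"
        using elim R by simp
      then show ?case by simp
    qed
  qed
qed

lemma powr_diff_le:
  fixes x y p :: real
  assumes x: "0 \<le> x" and xy: "x \<le> y" and p: "p \<ge> 1"
  shows "y powr p - x powr p \<le> p * (y - x) * y powr (p - 1)"
proof (cases "x = y")
  case True then show ?thesis by simp
next
  case False
  then have lt: "x < y" using xy by simp
  have "continuous_on {x..y} (\<lambda>t. t powr p)"
    using x p by (intro continuous_on_powr') (auto intro: continuous_intros)
  moreover have "(\<lambda>t. t powr p) differentiable (at t)" if "x < t" "t < y" for t
    using has_real_derivative_powr[of t p] that x real_differentiable_def by force
  ultimately obtain l z where z: "x < z" "z < y" and dz: "DERIV (\<lambda>t. t powr p) z :> l"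
     and eq: "y powr p - x powr p = (y - x) * l"
    using MVT[OF lt] by blast
  have "l = p * z powr (p - 1)"
    using DERIV_unique[OF dz has_real_derivative_powr[of z p]] z x by simp
  moreover have "z powr (p - 1) \<le> y powr (p - 1)"
    using z x p by (intro powr_mono2) auto
  ultimately show ?thesis using eq lt p
    by (simp add: mult_left_mono mult.assoc)
qed

lemma powr_abs_diff_le:
  fixes x y p :: real
  assumes x: "0 \<le> x" and y: "0 \<le> y" and p: "p \<ge> 1" and c: "max x y \<le> c"
  shows "\<bar>y powr p - x powr p\<bar> \<le> p * \<bar>y - x\<bar> * c powr (p - 1)"
proof -
  have c0: "0 \<le> c" using c x by simp
  show ?thesis
  proof (cases "x \<le> y")
    case True
    have "y powr p - x powr p \<le> p * (y - x) * y powr (p - 1)" by (rule powr_diff_le) (use True x p in auto)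
    also have "\<dots> \<le> p * (y - x) * c powr (p - 1)"
      using True p y c by (intro mult_left_mono powr_mono2) auto
    finally show ?thesis using True x p by (simp add: powr_mono2)
  next
    case False
    have "x powr p - y powr p \<le> p * (x - y) * x powr (p - 1)" by (rule powr_diff_le) (use False y p in auto)
    also have "\<dots> \<le> p * (x - y) * c powr (p - 1)"
      using False p x c by (intro mult_left_mono powr_mono2) auto
    finally show ?thesis using False y p by (simp add: powr_mono2)
  qed
qed

lemma powr_split_le:
  fixes c p l :: real
  assumes c: "0 \<le> c" and p: "p \<ge> 1" and l: "l > 0"
  shows "c powr (p - 1) \<le> l powr (p - 1) + c powr p / l"
proof (cases "c \<le> l")
  case True
  then have "c powr (p - 1) \<le> l powr (p - 1)" using c p by (intro powr_mono2) auto
  moreover have "0 \<le> c powr p / l" using l by simp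
  ultimately show ?thesis by linarith
next
  case False
  then have cpos: "c > 0" using l by simp
  have "c powr p = c powr (p - 1) * c" using cpos powr_add[of c "p - 1" 1] by simp
  then have "c powr p / l \<ge> c powr (p - 1)"
    using False l cpos by (simp add: le_divide_eq mult_left_mono)
  then show ?thesis by (smt (verit) powr_ge_zero)
qed

lemma powr_sum_le:
  fixes x d p :: real
  assumes x: "0 \<le> x" and d: "0 \<le> d" and p: "p \<ge> 0"
  shows "(x + d) powr p \<le> 2 powr p * (x powr p + d powr p)"
proof -
  have "(x + d) powr p \<le> (2 * max x d) powr p" using x d p by (intro powr_mono2) auto
  also have "\<dots> = 2 powr p * max x d powr p" using x d by (simp add: powr_mult)
  also have "\<dots> \<le> 2 powr p * (x powr p + d powr p)"
    by (intro mult_left_mono) (auto simp: max_def)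
  finally show ?thesis .
qed

lemma term_bound:
  fixes u v d p l :: real
  assumes p: "p > 1" and v: "\<bar>v\<bar> \<le> d" and l: "l > 0"
  shows "\<bar>\<bar>u + v\<bar> powr p - \<bar>u\<bar> powr p\<bar> \<le> p * d * (l powr (p - 1) + 2 powr p * (\<bar>u\<bar> powr p + d powr p) / l)"
proof -
  have d0: "0 \<le> d" using v by simp
  have "\<bar>\<bar>u + v\<bar> powr p - \<bar>u\<bar> powr p\<bar> \<le> p * \<bar>\<bar>u + v\<bar> - \<bar>u\<bar>\<bar> * (\<bar>u\<bar> + d) powr (p - 1)"
    using p v by (intro powr_abs_diff_le) auto
  also have "\<dots> \<le> p * d * (\<bar>u\<bar> + d) powr (p - 1)"
    using p v by (intro mult_right_mono mult_left_mono) auto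
  also have "\<dots> \<le> p * d * (l powr (p - 1) + (\<bar>u\<bar> + d) powr p / l)"
    using p d0 l by (intro mult_left_mono powr_split_le) auto
  also have "\<dots> \<le> p * d * (l powr (p - 1) + 2 powr p * (\<bar>u\<bar> powr p + d powr p) / l)"
    using p d0 l by (intro mult_left_mono add_left_mono divide_right_mono powr_sum_le) auto
  finally show ?thesis .
qed

lemma cont_bounded:
  fixes h :: "real \<Rightarrow> real"
  assumes "continuous_on {a..b} h"
  shows "\<exists>B>0. \<forall>x\<in>{a..b}. \<bar>h x\<bar> \<le> B"
proof -
  have "bounded (h ` {a..b})"
    by (intro compact_imp_bounded compact_continuous_image assms) auto
  then show ?thesis unfolding bounded_pos by auto
qed

lemma deriv_lip:
  fixes g g' :: "real \<Rightarrow> real"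
  assumes d: "\<And>t. t \<in> {a..b} \<Longrightarrow> (g has_real_derivative g' t) (at t within {a..b})"
    and B: "\<And>t. t \<in> {a..b} \<Longrightarrow> \<bar>g' t\<bar> \<le> B"
    and s: "s \<in> {a..b}" and t: "t \<in> {a..b}"
  shows "\<bar>g s - g t\<bar> \<le> B * \<bar>s - t\<bar>"
  using field_differentiable_bound[of "{a..b}" g g' B s t] d B s t by auto

lemma C1_lip:
  assumes "C1_on a b g"
  shows "\<exists>K>0. \<forall>s\<in>{a..b}. \<forall>t\<in>{a..b}. \<bar>g s - g t\<bar> \<le> K * \<bar>s - t\<bar>"
proof -
  obtain g' where c: "continuous_on {a..b} g'" and d: "\<forall>t\<in>{a..b}. (g has_real_derivative g' t) (at t within {a..b})"
    using assms unfolding C1_on_def by blast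
  obtain B where B: "B > 0" "\<forall>x\<in>{a..b}. \<bar>g' x\<bar> \<le> B" using cont_bounded[OF c] by blast
  show ?thesis using deriv_lip[of a b g g' B] d B by blast
qed

lemma part_pts:
  fixes a b :: real and n j :: nat
  assumes ab: "a < b" and j: "j \<in> {1..n}"
  shows "a + (b - a) * real j / real n \<in> {a..b}"
    and "a + (b - a) * real (j - 1) / real n \<in> {a..b}"
    and "(a + (b - a) * real j / real n) - (a + (b - a) * real (j - 1) / real n) = (b - a) / real n"
proof -
  have n: "real n \<ge> 1" "real j \<le> real n" "1 \<le> real j" using j by auto
  have "(b - a) * real j / real n \<le> (b - a)"
    using n ab by (simp add: divide_le_eq mult_left_mono)
  moreover have "0 \<le> (b - a) * real j / real n" using n ab by simp
  ultimately show "a + (b - a) * real j / real n \<in> {a..b}" by auto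
  have "(b - a) * real (j - 1) / real n \<le> (b - a)"
    using n ab by (simp add: divide_le_eq mult_left_mono)
  moreover have "0 \<le> (b - a) * real (j - 1) / real n" using n ab by simp
  ultimately show "a + (b - a) * real (j - 1) / real n \<in> {a..b}" by auto
  show "(a + (b - a) * real j / real n) - (a + (b - a) * real (j - 1) / real n) = (b - a) / real n"
    using n j by (simp add: of_nat_diff field_simps)
qed

lemma pvar_bound:
  fixes f g :: "real \<Rightarrow> real"
  assumes p: "p > 1" and ab: "a < b" and g: "C1_on a b g"
  shows "\<exists>L\<ge>0. \<forall>n\<ge>1. \<bar>pvar_n p (\<lambda>t. f t + g t) a b n - pvar_n p f a b n\<bar>
      \<le> p * L * real n powr (1/p - 1) * (1 + 2 powr p * (pvar_n p f a b n + L powr p))"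
proof -
  obtain K where K: "K > 0" "\<forall>s\<in>{a..b}. \<forall>t\<in>{a..b}. \<bar>g s - g t\<bar> \<le> K * \<bar>s - t\<bar>"
    using C1_lip[OF g] by blast
  define L where "L = K * (b - a)"
  have L0: "0 \<le> L" using K ab by (simp add: L_def)
  show ?thesis
  proof (intro exI[of _ L] conjI allI impI L0)
    fix n :: nat assume n1: "n \<ge> 1"
    define N where "N = real n"
    define \<delta> where "\<delta> = L / N"
    define l where "l = N powr (-1/p)"
    define T where "T j = a + (b - a) * real j / real n" for j
    define u where "u j = f (T j) - f (T (j - 1))" for j
    define v where "v j = g (T j) - g (T (j - 1))" for j
    have N1: "N \<ge> 1" using n1 by (simp add: N_def)
    have l0: "l > 0" using N1 by (simp add: l_def)
    have d0: "\<delta> \<ge> 0" using L0 N1 by (simp add: \<delta>_def)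
    have vb: "\<bar>v j\<bar> \<le> \<delta>" if j: "j \<in> {1..n}" for j
    proof -
      have "\<bar>v j\<bar> \<le> K * \<bar>T j - T (j - 1)\<bar>"
        unfolding v_def T_def using K(2) part_pts[OF ab j] by blast
      also have "\<dots> = \<delta>"
        unfolding T_def using part_pts(3)[OF ab j] ab by (simp add: \<delta>_def L_def N_def)
      finally show ?thesis .
    qed
    have eqs: "pvar_n p (\<lambda>t. f t + g t) a b n - pvar_n p f a b n
        = (\<Sum>j\<in>{1..n}. \<bar>u j + v j\<bar> powr p - \<bar>u j\<bar> powr p)"
      unfolding pvar_n_def u_def v_def T_def by (simp add: sum_subtractf algebra_simps)
    have Vdef: "pvar_n p f a b n = (\<Sum>j\<in>{1..n}. \<bar>u j\<bar> powr p)"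
      unfolding pvar_n_def u_def T_def by simp
    define A where "A = p * \<delta> * (l powr (p - 1) + 2 powr p * \<delta> powr p / l)"
    define B where "B = p * \<delta> * 2 powr p / l"
    have "\<bar>pvar_n p (\<lambda>t. f t + g t) a b n - pvar_n p f a b n\<bar>
        \<le> (\<Sum>j\<in>{1..n}. \<bar>\<bar>u j + v j\<bar> powr p - \<bar>u j\<bar> powr p\<bar>)"
      unfolding eqs by (rule sum_abs)
    also have "\<dots> \<le> (\<Sum>j\<in>{1..n}. A + B * \<bar>u j\<bar> powr p)"
    proof (rule sum_mono)
      fix j assume j: "j \<in> {1..n}"
      have "\<bar>\<bar>u j + v j\<bar> powr p - \<bar>u j\<bar> powr p\<bar>
          \<le> p * \<delta> * (l powr (p - 1) + 2 powr p * (\<bar>u j\<bar> powr p + \<delta> powr p) / l)"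
        by (rule term_bound[OF p vb[OF j] l0])
      also have "\<dots> = A + B * \<bar>u j\<bar> powr p"
        unfolding A_def B_def using l0 by (simp add: algebra_simps add_divide_distrib)
      finally show "\<bar>\<bar>u j + v j\<bar> powr p - \<bar>u j\<bar> powr p\<bar> \<le> A + B * \<bar>u j\<bar> powr p" .
    qed
    also have "\<dots> = N * A + B * pvar_n p f a b n"
      unfolding Vdef by (simp add: sum.distrib sum_distrib_left N_def)
    also have "\<dots> \<le> p * L * N powr (1/p - 1) * (1 + 2 powr p * (pvar_n p f a b n + L powr p))"
    proof -
      have Nd: "N * \<delta> = L" using N1 by (simp add: \<delta>_def)
      have e1: "l powr (p - 1) = N powr (1/p - 1)"
      proof -
        have "-1/p * (p - 1) = 1/p - 1" using p by (simp add: field_simps)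
        then show ?thesis unfolding l_def using p N1 by (simp add: powr_powr)
      qed
      have e2: "\<delta> / l = L * N powr (1/p - 1)"
      proof -
        have "N powr (1/p - 1) = N powr (1/p) / N" using N1 by (simp add: powr_diff)
        moreover have "l = 1 / N powr (1/p)" unfolding l_def using N1 by (simp add: powr_minus divide_inverse)
        ultimately show ?thesis by (simp add: \<delta>_def)
      qed
      have e3: "N * \<delta> powr p \<le> L powr p"
      proof -
        have "\<delta> powr p = L powr p / N powr p" using L0 N1 by (simp add: \<delta>_def powr_divide)
        moreover have "N \<le> N powr p" using N1 p powr_mono[of 1 p N] by simp
        moreover have "N powr p > 0" using N1 by simp
        ultimately have "N powr p * \<delta> powr p = L powr p" "N \<le> N powr p" by simp_all
        then show ?thesis by (metis mult_right_mono powr_ge_zero)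
      qed
      define E where "E = N powr (1/p - 1)"
      have E0: "E \<ge> 0" by (simp add: E_def)
      have V0: "pvar_n p f a b n \<ge> 0" unfolding pvar_n_def by (intro sum_nonneg) simp
      have "N * A = p * (N * \<delta>) * l powr (p - 1) + p * 2 powr p * (\<delta> / l) * (N * \<delta> powr p)"
        unfolding A_def by (simp add: field_simps)
      also have "\<dots> = p * L * E + p * 2 powr p * (L * E) * (N * \<delta> powr p)"
        unfolding Nd e1 e2 E_def ..
      also have "\<dots> \<le> p * L * E + p * 2 powr p * (L * E) * L powr p"
        using e3 p L0 E0 by (intro add_left_mono mult_left_mono) auto
      finally have 1: "N * A \<le> p * L * E + p * 2 powr p * (L * E) * L powr p" .
      have 2: "B * pvar_n p f a b n = p * 2 powr p * (L * E) * pvar_n p f a b n"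
        unfolding B_def E_def e2[symmetric] by (simp add: field_simps)
      have "N * A + B * pvar_n p f a b n \<le> p * L * E + p * 2 powr p * (L * E) * L powr p + p * 2 powr p * (L * E) * pvar_n p f a b n"
        using 1 2 by linarith
      also have "\<dots> = p * L * E * (1 + 2 powr p * (pvar_n p f a b n + L powr p))"
        by (simp add: algebra_simps)
      finally show ?thesis unfolding E_def .
    qed
    finally show "\<bar>pvar_n p (\<lambda>t. f t + g t) a b n - pvar_n p f a b n\<bar>
      \<le> p * L * real n powr (1/p - 1) * (1 + 2 powr p * (pvar_n p f a b n + L powr p))"
      by (simp add: N_def)
  qed
qed

lemma abel_sum:
  fixes F C :: "nat \<Rightarrow> real"
  shows "(\<Sum>j\<in>{1..m}. (F j - F (j - 1)) * C (j - 1))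
     = (\<Sum>j\<in>{1..m}. F j * (C (j - 1) - C j)) + F m * C m - F 0 * C 0"
proof (induction m)
  case 0 then show ?case by simp
next
  case (Suc m)
  then show ?case by (simp add: algebra_simps)
qed

lemma C2_facts:
  assumes "C2_on a b g"
  shows "\<exists>g' Mc K2. Mc > 0 \<and> K2 > 0 \<and> (\<forall>t\<in>{a..b}. (g has_real_derivative g' t) (at t within {a..b}))
     \<and> (\<forall>t\<in>{a..b}. \<bar>g' t\<bar> \<le> Mc) \<and> (\<forall>s\<in>{a..b}. \<forall>t\<in>{a..b}. \<bar>g' s - g' t\<bar> \<le> K2 * \<bar>s - t\<bar>)"
proof -
  obtain g' g'' where c: "continuous_on {a..b} g''"
    and d1: "\<forall>t\<in>{a..b}. (g has_real_derivative g' t) (at t within {a..b})"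
    and d2: "\<forall>t\<in>{a..b}. (g' has_real_derivative g'' t) (at t within {a..b})"
    using assms unfolding C2_on_def by blast
  have c': "continuous_on {a..b} g'" using d2 by (intro DERIV_continuous_on) auto
  obtain Mc where Mc: "Mc > 0" "\<forall>x\<in>{a..b}. \<bar>g' x\<bar> \<le> Mc" using cont_bounded[OF c'] by blast
  obtain K2 where K2: "K2 > 0" "\<forall>x\<in>{a..b}. \<bar>g'' x\<bar> \<le> K2" using cont_bounded[OF c] by blast
  have lip: "\<forall>s\<in>{a..b}. \<forall>t\<in>{a..b}. \<bar>g' s - g' t\<bar> \<le> K2 * \<bar>s - t\<bar>"
  proof (intro ballI)
    fix s t assume "s \<in> {a..b}" "t \<in> {a..b}"
    then show "\<bar>g' s - g' t\<bar> \<le> K2 * \<bar>s - t\<bar>"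
      using deriv_lip[of a b g' g'' K2 s t] d2 K2 by simp
  qed
  show ?thesis
    apply (rule exI[of _ g'], rule exI[of _ Mc], rule exI[of _ K2])
    using d1 Mc K2 lip by simp
qed

lemma C2_remainder:
  fixes g g' :: "real \<Rightarrow> real"
  assumes d1: "\<forall>t\<in>{a..b}. (g has_real_derivative g' t) (at t within {a..b})"
    and lip: "\<forall>s\<in>{a..b}. \<forall>t\<in>{a..b}. \<bar>g' s - g' t\<bar> \<le> K2 * \<bar>s - t\<bar>"
    and st: "a \<le> s" "s \<le> t" "t \<le> b" and K20: "K2 \<ge> 0"
  shows "\<bar>g t - g s - g' s * (t - s)\<bar> \<le> K2 * (t - s) * (t - s)"
proof -
  define \<phi> where "\<phi> x = g x - g' s * x" for x
  have der: "(\<phi> has_field_derivative g' z - g' s) (at z within {s..t})" if z: "z \<in> {s..t}" for z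
  proof -
    have za: "z \<in> {a..b}" using z st by auto
    have "(g has_real_derivative g' z) (at z within {a..b})" using d1 za by blast
    then have "(g has_real_derivative g' z) (at z within {s..t})"
      by (rule has_field_derivative_subset) (use st in auto)
    then have "((\<lambda>x. g x - g' s * x) has_real_derivative g' z - g' s * 1) (at z within {s..t})"
      by (intro DERIV_diff DERIV_cmult DERIV_ident)
    then show ?thesis unfolding \<phi>_def by simp
  qed
  have bnd: "norm (g' z - g' s) \<le> K2 * (t - s)" if z: "z \<in> {s..t}" for z
  proof -
    have za: "z \<in> {a..b}" and sa: "s \<in> {a..b}" using z st by auto
    have "\<bar>g' z - g' s\<bar> \<le> K2 * \<bar>z - s\<bar>" using lip za sa by blast
    also have "\<dots> \<le> K2 * (t - s)" using z K20 by (intro mult_left_mono) auto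
    finally show ?thesis by simp
  qed
  have "norm (\<phi> t - \<phi> s) \<le> (K2 * (t - s)) * norm (t - s)"
    by (rule field_differentiable_bound[of "{s..t}" \<phi> "\<lambda>x. g' x - g' s", OF _ der bnd]) (use st in auto)
  moreover have "\<phi> t - \<phi> s = g t - g s - g' s * (t - s)" unfolding \<phi>_def by (simp add: algebra_simps)
  ultimately show ?thesis using st by simp
qed
lemma abs_powr_two: "\<bar>x::real\<bar> powr 2 = x^2"
  by (cases "x = 0") (simp_all add: powr_numeral)

lemma abs_le_sq1: "\<bar>x::real\<bar> \<le> 1 + x^2"
proof (cases "\<bar>x\<bar> \<le> 1")
  case True then show ?thesis using zero_le_power2[of x] by linarith
next
  case False
  then have "\<bar>x\<bar> * 1 \<le> \<bar>x\<bar> * \<bar>x\<bar>" by (intro mult_left_mono) auto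
  then show ?thesis by (simp add: abs_mult_self_eq power2_eq_square)
qed


lemma pvar2_bound:
  fixes f g :: "real \<Rightarrow> real"
  assumes ab: "a < b" and fc: "continuous_on {a..b} f" and g: "C2_on a b g"
  shows "\<exists>C. \<forall>n\<ge>1. \<bar>pvar_n 2 (\<lambda>t. f t + g t) a b n - pvar_n 2 f a b n\<bar>
            \<le> (C + 2 * C * \<bar>pvar_n 2 f a b n\<bar> / real n) / real n"
proof -
  obtain g' Mc K2 where Mc: "Mc > 0" and K2: "K2 > 0"
    and d1: "\<forall>t\<in>{a..b}. (g has_real_derivative g' t) (at t within {a..b})"
    and gb: "\<forall>t\<in>{a..b}. \<bar>g' t\<bar> \<le> Mc"
    and lip: "\<forall>s\<in>{a..b}. \<forall>t\<in>{a..b}. \<bar>g' s - g' t\<bar> \<le> K2 * \<bar>s - t\<bar>"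
    using C2_facts[OF g] by blast
  obtain Mf where Mf: "Mf > 0" "\<forall>x\<in>{a..b}. \<bar>f x\<bar> \<le> Mf" using cont_bounded[OF fc] by blast
  define Q where "Q = Mf * K2 * (b - a) + 2 * Mf * Mc"
  define C where "C = 2 * (b - a) * Q + 2 * K2 * (b - a)^2 + Mc^2 * (b - a)^2"
  show ?thesis
  proof (intro exI[of _ C] allI impI)
    fix n :: nat assume n1: "n \<ge> 1"
    define N where "N = real n"
    have N1: "N \<ge> 1" using n1 by (simp add: N_def)
    define h where "h = (b - a) / N"
    have h0: "h > 0" using ab N1 by (simp add: h_def)
    define T where "T j = a + (b - a) * real j / real n" for j
    define u where "u j = f (T j) - f (T (j - 1))" for j
    define v where "v j = g (T j) - g (T (j - 1))" for j
    define c where "c j = g' (T j)" for j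
    define r where "r j = v j - c (j - 1) * h" for j
    define V where "V = pvar_n 2 f a b n"
    have Tin: "T j \<in> {a..b}" "T (j - 1) \<in> {a..b}" "T j - T (j - 1) = h" if "j \<in> {1..n}" for j
      using part_pts[OF ab that] by (simp_all add: T_def h_def N_def)
    have T0: "T 0 = a" and Tn: "T n = b" using n1 by (simp_all add: T_def)
    have Vdef: "V = (\<Sum>j\<in>{1..n}. (u j)^2)"
      unfolding V_def pvar_n_def u_def T_def by (simp add: abs_powr_two)
    have Deq: "pvar_n 2 (\<lambda>t. f t + g t) a b n - V = 2 * (\<Sum>j\<in>{1..n}. u j * v j) + (\<Sum>j\<in>{1..n}. (v j)^2)"
    proof -
      have "pvar_n 2 (\<lambda>t. f t + g t) a b n = (\<Sum>j\<in>{1..n}. (u j + v j)^2)"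
        unfolding pvar_n_def u_def v_def T_def by (simp add: abs_powr_two algebra_simps)
      then show ?thesis unfolding Vdef
        by (simp add: power2_eq_square algebra_simps sum.distrib sum_distrib_left)
    qed
    have rb: "\<bar>r j\<bar> \<le> K2 * h * h" if j: "j \<in> {1..n}" for j
    proof -
      have "\<bar>g (T j) - g (T (j - 1)) - g' (T (j - 1)) * (T j - T (j - 1))\<bar>
          \<le> K2 * (T j - T (j - 1)) * (T j - T (j - 1))"
        using Tin[OF j] h0 K2 by (intro C2_remainder[OF d1 lip]) auto
      then show ?thesis using Tin[OF j] by (simp add: r_def v_def c_def)
    qed
    have vb: "\<bar>v j\<bar> \<le> Mc * h" if j: "j \<in> {1..n}" for j
      using deriv_lip[of a b g g' Mc "T j" "T (j - 1)"] d1 gb Tin[OF j] h0 by (simp add: v_def)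
    have Fb: "\<bar>f (T j)\<bar> \<le> Mf" if "j \<le> n" for j
    proof (cases "j = 0")
      case True then show ?thesis using Mf ab by (simp add: T0)
    next
      case False then show ?thesis using Mf Tin[of j] that by simp
    qed
    have Cb: "\<bar>c j\<bar> \<le> Mc" if "j \<le> n" for j
    proof (cases "j = 0")
      case True then show ?thesis using gb ab by (simp add: T0 c_def)
    next
      case False then show ?thesis using gb Tin[of j] that by (simp add: c_def)
    qed
    have abel: "(\<Sum>j\<in>{1..n}. u j * c (j - 1))
        = (\<Sum>j\<in>{1..n}. f (T j) * (c (j - 1) - c j)) + f (T n) * c n - f (T 0) * c 0"
      unfolding u_def using abel_sum[of "\<lambda>j. f (T j)" c n] by simp
    have S1: "\<bar>\<Sum>j\<in>{1..n}. u j * c (j - 1)\<bar> \<le> Q"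
    proof -
      have "\<bar>\<Sum>j\<in>{1..n}. f (T j) * (c (j - 1) - c j)\<bar> \<le> (\<Sum>j\<in>{1..n}. Mf * (K2 * h))"
      proof (rule order_trans[OF sum_abs sum_mono])
        fix j assume j: "j \<in> {1..n}"
        have "\<bar>g' (T j) - g' (T (j - 1))\<bar> \<le> K2 * \<bar>T j - T (j - 1)\<bar>"
          using lip Tin[OF j] by blast
        then have "\<bar>c (j - 1) - c j\<bar> \<le> K2 * h"
          using Tin[OF j] h0 by (simp add: c_def abs_minus_commute)
        then show "\<bar>f (T j) * (c (j - 1) - c j)\<bar> \<le> Mf * (K2 * h)"
          unfolding abs_mult using Fb[of j] j by (intro mult_mono) auto
      qed
      also have "\<dots> = Mf * K2 * (b - a)" using N1 by (simp add: h_def N_def)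
      finally have 1: "\<bar>\<Sum>j\<in>{1..n}. f (T j) * (c (j - 1) - c j)\<bar> \<le> Mf * K2 * (b - a)" .
      have 2: "\<bar>f (T n) * c n\<bar> \<le> Mf * Mc" unfolding abs_mult using Fb[of n] Cb[of n] by (intro mult_mono) auto
      have 3: "\<bar>f (T 0) * c 0\<bar> \<le> Mf * Mc" unfolding abs_mult using Fb[of 0] Cb[of 0] by (intro mult_mono) auto
      show ?thesis unfolding abel Q_def using 1 2 3 by linarith
    qed
    have S2: "\<bar>\<Sum>j\<in>{1..n}. u j * r j\<bar> \<le> K2 * h * h * (N + V)"
    proof -
      have "\<bar>\<Sum>j\<in>{1..n}. u j * r j\<bar> \<le> (\<Sum>j\<in>{1..n}. (K2 * h * h) * (1 + (u j)^2))"
      proof (rule order_trans[OF sum_abs sum_mono])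
        fix j assume j: "j \<in> {1..n}"
        show "\<bar>u j * r j\<bar> \<le> (K2 * h * h) * (1 + (u j)^2)"
          unfolding abs_mult using rb[OF j] abs_le_sq1[of "u j"]
          by (subst mult.commute) (intro mult_mono, auto)
      qed
      also have "\<dots> = K2 * h * h * (N + V)"
        unfolding Vdef by (simp add: sum_distrib_left sum.distrib N_def algebra_simps)
      finally show ?thesis .
    qed
    have S3: "\<bar>\<Sum>j\<in>{1..n}. (v j)^2\<bar> \<le> N * (Mc * h)^2"
    proof -
      have "\<bar>\<Sum>j\<in>{1..n}. (v j)^2\<bar> \<le> (\<Sum>j\<in>{1..n}. (Mc * h)^2)"
      proof (rule order_trans[OF sum_abs sum_mono])
        fix j assume j: "j \<in> {1..n}"
        show "\<bar>(v j)^2\<bar> \<le> (Mc * h)^2"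
          using vb[OF j] power_mono[of "\<bar>v j\<bar>" "Mc * h" 2] by simp
      qed
      also have "\<dots> = N * (Mc * h)^2" by (simp add: N_def)
      finally show ?thesis .
    qed
    have uv: "(\<Sum>j\<in>{1..n}. u j * v j) = h * (\<Sum>j\<in>{1..n}. u j * c (j - 1)) + (\<Sum>j\<in>{1..n}. u j * r j)"
    proof -
      have "h * (\<Sum>j\<in>{1..n}. u j * c (j - 1)) + (\<Sum>j\<in>{1..n}. u j * r j)
          = (\<Sum>j\<in>{1..n}. h * (u j * c (j - 1)) + u j * r j)"
        by (simp add: sum.distrib sum_distrib_left)
      also have "\<dots> = (\<Sum>j\<in>{1..n}. u j * v j)"
        by (rule sum.cong) (simp_all add: r_def algebra_simps)
      finally show ?thesis by simp
    qed
    have "\<bar>pvar_n 2 (\<lambda>t. f t + g t) a b n - V\<bar>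
        \<le> 2 * (h * Q + K2 * h * h * (N + V)) + N * (Mc * h)^2"
    proof -
      have "\<bar>\<Sum>j\<in>{1..n}. u j * v j\<bar> \<le> h * Q + K2 * h * h * (N + V)"
      proof -
        have "\<bar>h * (\<Sum>j\<in>{1..n}. u j * c (j - 1))\<bar> \<le> h * Q"
          using S1 h0 by (simp add: abs_mult mult_left_mono)
        then show ?thesis unfolding uv using S2 abs_triangle_ineq[of "h * (\<Sum>j\<in>{1..n}. u j * c (j - 1))" "\<Sum>j\<in>{1..n}. u j * r j"] by linarith
      qed
      then show ?thesis unfolding Deq using S3
        abs_triangle_ineq[of "2 * (\<Sum>j\<in>{1..n}. u j * v j)" "\<Sum>j\<in>{1..n}. (v j)^2"] by (simp add: abs_mult)
    qed
    also have "\<dots> = (C + 2 * (K2 * (b - a)^2) * V / N) / N"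
      unfolding C_def h_def using N1 by (simp add: field_simps power2_eq_square)
    also have "\<dots> \<le> (C + 2 * C * \<bar>V\<bar> / N) / N"
    proof -
      have "K2 * (b - a)^2 \<le> C" unfolding C_def Q_def using Mf Mc K2 ab by simp
      moreover have "K2 * (b - a)^2 * V \<le> K2 * (b - a)^2 * \<bar>V\<bar>"
        using K2 by (intro mult_left_mono) auto
      moreover have "K2 * (b - a)^2 * \<bar>V\<bar> \<le> C * \<bar>V\<bar>" if "K2 * (b - a)^2 \<le> C"
        using that by (intro mult_right_mono) auto
      ultimately have "2 * (K2 * (b - a)^2) * V \<le> 2 * C * \<bar>V\<bar>" by linarith
      then show ?thesis using N1 by (simp add: divide_right_mono)
    qed
    finally show "\<bar>pvar_n 2 (\<lambda>t. f t + g t) a b n - pvar_n 2 f a b n\<bar>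
            \<le> (C + 2 * C * \<bar>pvar_n 2 f a b n\<bar> / real n) / real n" by (simp add: V_def N_def)
  qed
qed

lemma normal_facts:
  fixes \<sigma> :: real
  assumes s: "\<sigma> > 0"
  shows "\<And>x. isCont (cdf (density lborel (normal_density 0 \<sigma>))) x"
proof -
  interpret real_distribution "density lborel (normal_density 0 \<sigma>)"
    using prob_space_normal_density[OF s] by (simp add: real_distribution_def real_distribution_axioms_def)
  fix x :: real
  have "AE y in lborel. y \<in> {x} \<longrightarrow> ennreal (normal_density 0 \<sigma> y) = 0"
    using AE_lborel_singleton[of x] by eventually_elim auto
  then have "{x} \<in> null_sets (density lborel (normal_density 0 \<sigma>))"
    by (subst null_sets_density_iff) auto
  then have "measure (density lborel (normal_density 0 \<sigma>)) {x} = 0"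
    by (simp add: measure_def null_setsD1)
  then show "isCont (cdf (density lborel (normal_density 0 \<sigma>))) x" by (simp add: isCont_cdf)
qed

lemma powr_tendsto_zero:
  fixes K s :: real
  assumes "s < 0"
  shows "(\<lambda>n. K * real n powr s) \<longlonglongrightarrow> 0"
  using tendsto_mult_right_zero[OF tendsto_neg_powr[OF assms filterlim_real_sequentially]]
  by simp

lemma rate_p:
  fixes f g :: "real \<Rightarrow> real"
  assumes p: "p > 1" and ab: "a < b" and g: "C1_on a b g" and al: "\<alpha> + 1 / p < 1"
    and R: "\<And>n. \<bar>pvar_n p f a b n\<bar> \<le> R"
  shows "(\<lambda>n. real n powr \<alpha> * (pvar_n p (\<lambda>t. f t + g t) a b n - pvar_n p f a b n)) \<longlonglongrightarrow> 0"
proof -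
  obtain L where L: "L \<ge> 0" and bnd: "\<And>n. n \<ge> 1 \<Longrightarrow> \<bar>pvar_n p (\<lambda>t. f t + g t) a b n - pvar_n p f a b n\<bar>
      \<le> p * L * real n powr (1/p - 1) * (1 + 2 powr p * (pvar_n p f a b n + L powr p))"
    using pvar_bound[OF p ab g, of f] by blast
  define K where "K = p * L * (1 + 2 powr p * (R + L powr p))"
  show ?thesis
  proof (rule Lim_null_comparison)
    show "(\<lambda>n. K * real n powr (\<alpha> + 1/p - 1)) \<longlonglongrightarrow> 0"
      using al by (intro powr_tendsto_zero) simp
    show "eventually (\<lambda>n. norm (real n powr \<alpha> * (pvar_n p (\<lambda>t. f t + g t) a b n - pvar_n p f a b n))
        \<le> K * real n powr (\<alpha> + 1/p - 1)) sequentially"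
      unfolding eventually_sequentially
    proof (intro exI[of _ 1] allI impI)
      fix n :: nat assume n: "n \<ge> 1"
      have "p * L * real n powr (1/p - 1) * (1 + 2 powr p * (pvar_n p f a b n + L powr p))
          \<le> p * L * real n powr (1/p - 1) * (1 + 2 powr p * (R + L powr p))"
        using p L R[of n] by (intro mult_left_mono add_left_mono) auto
      then have "\<bar>pvar_n p (\<lambda>t. f t + g t) a b n - pvar_n p f a b n\<bar> \<le> K * real n powr (1/p - 1)"
        using bnd[OF n] by (simp add: K_def algebra_simps)
      then have "real n powr \<alpha> * \<bar>pvar_n p (\<lambda>t. f t + g t) a b n - pvar_n p f a b n\<bar>
          \<le> real n powr \<alpha> * (K * real n powr (1/p - 1))"
        by (intro mult_left_mono) auto
      also have "\<dots> = K * real n powr (\<alpha> + 1/p - 1)"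
        using n by (simp add: powr_add[symmetric] algebra_simps)
      finally show "norm (real n powr \<alpha> * (pvar_n p (\<lambda>t. f t + g t) a b n - pvar_n p f a b n))
        \<le> K * real n powr (\<alpha> + 1/p - 1)" by (simp add: abs_mult)
    qed
  qed
qed

lemma rate_2:
  fixes f g :: "real \<Rightarrow> real"
  assumes ab: "a < b" and fc: "continuous_on {a..b} f" and g: "C2_on a b g"
    and R: "\<And>n. \<bar>pvar_n 2 f a b n\<bar> \<le> R"
  shows "(\<lambda>n. real n powr (1/2) * (pvar_n 2 (\<lambda>t. f t + g t) a b n - pvar_n 2 f a b n)) \<longlonglongrightarrow> 0"
proof -
  obtain C where bnd: "\<And>n. n \<ge> 1 \<Longrightarrow> \<bar>pvar_n 2 (\<lambda>t. f t + g t) a b n - pvar_n 2 f a b n\<bar>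
            \<le> (C + 2 * C * \<bar>pvar_n 2 f a b n\<bar> / real n) / real n"
    using pvar2_bound[OF ab fc g] by blast
  define K where "K = \<bar>C\<bar> + 2 * \<bar>C\<bar> * R"
  show ?thesis
  proof (rule Lim_null_comparison)
    show "(\<lambda>n. K * real n powr (- 1/2)) \<longlonglongrightarrow> 0"
      by (intro powr_tendsto_zero) simp
    show "eventually (\<lambda>n. norm (real n powr (1/2) * (pvar_n 2 (\<lambda>t. f t + g t) a b n - pvar_n 2 f a b n))
        \<le> K * real n powr (- 1/2)) sequentially"
      unfolding eventually_sequentially
    proof (intro exI[of _ 1] allI impI)
      fix n :: nat assume n: "n \<ge> 1"
      have n1: "real n \<ge> 1" using n by simp
      have "2 * C * \<bar>pvar_n 2 f a b n\<bar> / real n \<le> 2 * \<bar>C\<bar> * R"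
      proof -
        have "C * \<bar>pvar_n 2 f a b n\<bar> \<le> \<bar>C\<bar> * \<bar>pvar_n 2 f a b n\<bar>"
          by (intro mult_right_mono) auto
        then have "2 * C * \<bar>pvar_n 2 f a b n\<bar> \<le> 2 * \<bar>C\<bar> * \<bar>pvar_n 2 f a b n\<bar>" by simp
        then have "2 * C * \<bar>pvar_n 2 f a b n\<bar> / real n \<le> 2 * \<bar>C\<bar> * \<bar>pvar_n 2 f a b n\<bar> / real n"
          using n1 by (intro divide_right_mono) auto
        also have "\<dots> \<le> 2 * \<bar>C\<bar> * \<bar>pvar_n 2 f a b n\<bar>"
        proof -
          have X0: "0 \<le> 2 * \<bar>C\<bar> * \<bar>pvar_n 2 f a b n\<bar>" by simp
          have "2 * \<bar>C\<bar> * \<bar>pvar_n 2 f a b n\<bar> * 1 \<le> 2 * \<bar>C\<bar> * \<bar>pvar_n 2 f a b n\<bar> * real n"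
            using n1 X0 by (intro mult_left_mono) auto
          then show ?thesis using n1 by (simp add: divide_le_eq)
        qed
        also have "\<dots> \<le> 2 * \<bar>C\<bar> * R" using R[of n] by (intro mult_left_mono) auto
        finally show ?thesis .
      qed
      then have "C + 2 * C * \<bar>pvar_n 2 f a b n\<bar> / real n \<le> K" unfolding K_def by linarith
      then have "\<bar>pvar_n 2 (\<lambda>t. f t + g t) a b n - pvar_n 2 f a b n\<bar> \<le> K / real n"
      proof -
        have "(C + 2 * C * \<bar>pvar_n 2 f a b n\<bar> / real n) / real n \<le> K / real n"
          using \<open>C + 2 * C * \<bar>pvar_n 2 f a b n\<bar> / real n \<le> K\<close> n1 by (intro divide_right_mono) auto
        then show ?thesis using bnd[OF n] by linarith
      qed
      then have "real n powr (1/2) * \<bar>pvar_n 2 (\<lambda>t. f t + g t) a b n - pvar_n 2 f a b n\<bar>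
          \<le> real n powr (1/2) * (K / real n)"
        by (intro mult_left_mono) auto
      also have "\<dots> = K * real n powr (- 1/2)"
      proof -
        have "real n powr (- 1/2) = real n powr (1/2) / real n powr 1"
          using n1 powr_diff[of "real n" "1/2" 1] by simp
        then show ?thesis using n1 by simp
      qed
      finally show "norm (real n powr (1/2) * (pvar_n 2 (\<lambda>t. f t + g t) a b n - pvar_n 2 f a b n))
        \<le> K * real n powr (- 1/2)" by (simp add: abs_mult)
    qed
  qed
qed

lemma pvar_meas:
  fixes X :: "real \<Rightarrow> 'a \<Rightarrow> real"
  assumes "\<And>t. X t \<in> borel_measurable M"
  shows "(\<lambda>\<omega>. pvar_n p (\<lambda>t. X t \<omega>) a b n) \<in> borel_measurable M"
proof -
  note assms[measurable]
  show ?thesis unfolding pvar_n_def by measurable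
qed


theorem proposition2p1:
  fixes M :: "'a measure" and X Y :: "real \<Rightarrow> 'a \<Rightarrow> real" and a b :: real
  assumes "prob_space M"
    and "a < b"
    and "\<And>t. X t \<in> borel_measurable M"
    and "\<And>t. Y t \<in> borel_measurable M"
    and "\<And>\<omega>. \<omega> \<in> space M \<Longrightarrow> continuous_on {a..b} (\<lambda>t. X t \<omega>)"
    and "\<And>\<omega>. \<omega> \<in> space M \<Longrightarrow> C1_on a b (\<lambda>t. Y t \<omega>)"
  shows
    "(\<forall>p>1. (AE \<omega> in M. convergent (\<lambda>n. pvar_n p (\<lambda>t. X t \<omega>) a b n)
                          \<and> 0 < lim (\<lambda>n. pvar_n p (\<lambda>t. X t \<omega>) a b n))
        \<longrightarrow> (AE \<omega> in M. (\<lambda>n. pvar_n p (\<lambda>t. X t \<omega> + Y t \<omega>) a b n)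
                \<longlonglongrightarrow> lim (\<lambda>n. pvar_n p (\<lambda>t. X t \<omega>) a b n)))
   \<and> (\<forall>p>1. \<forall>V. V \<in> borel_measurable M \<and> (AE \<omega> in M. 0 < V \<omega>)
        \<and> conv_in_prob M (\<lambda>n \<omega>. pvar_n p (\<lambda>t. X t \<omega>) a b n) V
        \<longrightarrow> conv_in_prob M (\<lambda>n \<omega>. pvar_n p (\<lambda>t. X t \<omega> + Y t \<omega>) a b n) V)
   \<and> (\<forall>p>1. \<forall>\<alpha>>0. \<forall>\<sigma>\<^sub>0>0. \<alpha> + 1 / p < 1
        \<and> (AE \<omega> in M. convergent (\<lambda>n. pvar_n p (\<lambda>t. X t \<omega>) a b n)
                          \<and> 0 < lim (\<lambda>n. pvar_n p (\<lambda>t. X t \<omega>) a b n))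
        \<and> weak_conv_m (\<lambda>n. distr M borel (\<lambda>\<omega>. real n powr \<alpha> *
              (pvar_n p (\<lambda>t. X t \<omega>) a b n - lim (\<lambda>m. pvar_n p (\<lambda>t. X t \<omega>) a b m))))
            (density lborel (normal_density 0 \<sigma>\<^sub>0))
        \<longrightarrow> weak_conv_m (\<lambda>n. distr M borel (\<lambda>\<omega>. real n powr \<alpha> *
              (pvar_n p (\<lambda>t. X t \<omega> + Y t \<omega>) a b n - lim (\<lambda>m. pvar_n p (\<lambda>t. X t \<omega>) a b m))))
            (density lborel (normal_density 0 \<sigma>\<^sub>0)))
   \<and> ((\<forall>\<omega>\<in>space M. C2_on a b (\<lambda>t. Y t \<omega>)) \<longrightarrow>
      (\<forall>\<sigma>\<^sub>0>0.
        (AE \<omega> in M. convergent (\<lambda>n. pvar_n 2 (\<lambda>t. X t \<omega>) a b n)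
                          \<and> 0 < lim (\<lambda>n. pvar_n 2 (\<lambda>t. X t \<omega>) a b n))
        \<and> weak_conv_m (\<lambda>n. distr M borel (\<lambda>\<omega>. real n powr (1/2) *
              (pvar_n 2 (\<lambda>t. X t \<omega>) a b n - lim (\<lambda>m. pvar_n 2 (\<lambda>t. X t \<omega>) a b m))))
            (density lborel (normal_density 0 \<sigma>\<^sub>0))
        \<longrightarrow> weak_conv_m (\<lambda>n. distr M borel (\<lambda>\<omega>. real n powr (1/2) *
              (pvar_n 2 (\<lambda>t. X t \<omega> + Y t \<omega>) a b n - lim (\<lambda>m. pvar_n 2 (\<lambda>t. X t \<omega>) a b m))))
            (density lborel (normal_density 0 \<sigma>\<^sub>0))))"
proof -
  note P = assms(1)
  interpret prob_space M by (rule assms(1))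
  note Xm = assms(3) and Ym = assms(4)
  have XYm: "\<And>t. (\<lambda>\<omega>. X t \<omega> + Y t \<omega>) \<in> borel_measurable M"
    using Xm Ym by (intro borel_measurable_add) auto
  have mX: "\<And>p n. (\<lambda>\<omega>. pvar_n p (\<lambda>t. X t \<omega>) a b n) \<in> borel_measurable M"
    by (rule pvar_meas[OF Xm])
  have mXY: "\<And>p n. (\<lambda>\<omega>. pvar_n p (\<lambda>t. X t \<omega> + Y t \<omega>) a b n) \<in> borel_measurable M"
    using pvar_meas[of "\<lambda>t \<omega>. X t \<omega> + Y t \<omega>", OF XYm] by simp
  have mL: "\<And>p. (\<lambda>\<omega>. lim (\<lambda>m. pvar_n p (\<lambda>t. X t \<omega>) a b m)) \<in> borel_measurable M"
    by (rule borel_measurable_lim_metric[OF mX])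
  have bdd: "\<exists>R. \<forall>n. \<bar>pvar_n p (\<lambda>t. X t \<omega>) a b n\<bar> \<le> R"
    if "convergent (\<lambda>n. pvar_n p (\<lambda>t. X t \<omega>) a b n)" for p \<omega>
    using convergent_imp_Bseq[OF that] by (auto simp: Bseq_def)
  have part1: "\<forall>p>1. (AE \<omega> in M. convergent (\<lambda>n. pvar_n p (\<lambda>t. X t \<omega>) a b n)
                          \<and> 0 < lim (\<lambda>n. pvar_n p (\<lambda>t. X t \<omega>) a b n))
        \<longrightarrow> (AE \<omega> in M. (\<lambda>n. pvar_n p (\<lambda>t. X t \<omega> + Y t \<omega>) a b n)
                \<longlonglongrightarrow> lim (\<lambda>n. pvar_n p (\<lambda>t. X t \<omega>) a b n))"
  proof (intro allI impI)
    fix p :: real assume p: "p > 1" and ae: "AE \<omega> in M. convergent (\<lambda>n. pvar_n p (\<lambda>t. X t \<omega>) a b n)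
                          \<and> 0 < lim (\<lambda>n. pvar_n p (\<lambda>t. X t \<omega>) a b n)"
    show "AE \<omega> in M. (\<lambda>n. pvar_n p (\<lambda>t. X t \<omega> + Y t \<omega>) a b n)
                \<longlonglongrightarrow> lim (\<lambda>n. pvar_n p (\<lambda>t. X t \<omega>) a b n)"
      using ae
    proof (rule AE_mp, intro AE_I2 impI)
      fix \<omega> assume \<omega>: "\<omega> \<in> space M" and c: "convergent (\<lambda>n. pvar_n p (\<lambda>t. X t \<omega>) a b n)
                          \<and> 0 < lim (\<lambda>n. pvar_n p (\<lambda>t. X t \<omega>) a b n)"
      then obtain R where R: "\<And>n. \<bar>pvar_n p (\<lambda>t. X t \<omega>) a b n\<bar> \<le> R" using bdd by blast
      have conv0: "(\<lambda>n. real n powr 0 * (pvar_n p (\<lambda>t. X t \<omega> + Y t \<omega>) a b n - pvar_n p (\<lambda>t. X t \<omega>) a b n)) \<longlonglongrightarrow> 0"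
        using rate_p[OF p assms(2) assms(6)[OF \<omega>], of 0 "\<lambda>t. X t \<omega>" R] R p by simp
      have ev0: "eventually (\<lambda>n. real n powr 0 * (pvar_n p (\<lambda>t. X t \<omega> + Y t \<omega>) a b n - pvar_n p (\<lambda>t. X t \<omega>) a b n)
          = pvar_n p (\<lambda>t. X t \<omega> + Y t \<omega>) a b n - pvar_n p (\<lambda>t. X t \<omega>) a b n) sequentially"
        unfolding eventually_sequentially by (intro exI[of _ 1]) auto
      have D: "(\<lambda>n. pvar_n p (\<lambda>t. X t \<omega> + Y t \<omega>) a b n - pvar_n p (\<lambda>t. X t \<omega>) a b n) \<longlonglongrightarrow> 0"
        by (rule tendsto_cong[THEN iffD1, OF ev0 conv0])
      have "(\<lambda>n. pvar_n p (\<lambda>t. X t \<omega>) a b n) \<longlonglongrightarrow> lim (\<lambda>n. pvar_n p (\<lambda>t. X t \<omega>) a b n)"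
        using c by (simp add: convergent_LIMSEQ_iff)
      from tendsto_add[OF this D]
      show "(\<lambda>n. pvar_n p (\<lambda>t. X t \<omega> + Y t \<omega>) a b n) \<longlonglongrightarrow> lim (\<lambda>n. pvar_n p (\<lambda>t. X t \<omega>) a b n)"
        by simp
    qed
  qed
  have part2: "\<forall>p>1. \<forall>V. V \<in> borel_measurable M \<and> (AE \<omega> in M. 0 < V \<omega>)
        \<and> conv_in_prob M (\<lambda>n \<omega>. pvar_n p (\<lambda>t. X t \<omega>) a b n) V
        \<longrightarrow> conv_in_prob M (\<lambda>n \<omega>. pvar_n p (\<lambda>t. X t \<omega> + Y t \<omega>) a b n) V"
  proof (intro allI impI)
    fix p :: real and V assume p: "p > 1" and H: "V \<in> borel_measurable M \<and> (AE \<omega> in M. 0 < V \<omega>)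
        \<and> conv_in_prob M (\<lambda>n \<omega>. pvar_n p (\<lambda>t. X t \<omega>) a b n) V"
    show "conv_in_prob M (\<lambda>n \<omega>. pvar_n p (\<lambda>t. X t \<omega> + Y t \<omega>) a b n) V"
    proof (rule inprob_perturb[OF P mX mXY])
      show "V \<in> borel_measurable M" "conv_in_prob M (\<lambda>n \<omega>. pvar_n p (\<lambda>t. X t \<omega>) a b n) V" using H by auto
      fix \<omega> and e R :: real assume \<omega>: "\<omega> \<in> space M" and e: "e > 0"
      obtain L where L: "L \<ge> 0" and bnd: "\<And>n. n \<ge> 1 \<Longrightarrow> \<bar>pvar_n p (\<lambda>t. X t \<omega> + Y t \<omega>) a b n - pvar_n p (\<lambda>t. X t \<omega>) a b n\<bar>
        \<le> p * L * real n powr (1/p - 1) * (1 + 2 powr p * (pvar_n p (\<lambda>t. X t \<omega>) a b n + L powr p))"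
        using pvar_bound[OF p assms(2) assms(6)[OF \<omega>], of "\<lambda>t. X t \<omega>"] by blast
      define K where "K = p * L * (1 + 2 powr p * (R + L powr p))"
      have "(\<lambda>n. K * real n powr (1/p - 1)) \<longlonglongrightarrow> 0" using p by (intro powr_tendsto_zero) simp
      then have "eventually (\<lambda>n. dist (K * real n powr (1/p - 1)) 0 < e) sequentially"
        using e by (rule tendstoD)
      moreover have "eventually (\<lambda>n. n \<ge> 1) sequentially" by (rule eventually_ge_at_top)
      ultimately show "eventually (\<lambda>n. \<bar>pvar_n p (\<lambda>t. X t \<omega>) a b n\<bar> \<le> R \<longrightarrow>
          \<bar>pvar_n p (\<lambda>t. X t \<omega> + Y t \<omega>) a b n - pvar_n p (\<lambda>t. X t \<omega>) a b n\<bar> \<le> e) sequentially"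
      proof eventually_elim
        case (elim n)
        show ?case
        proof
          assume "\<bar>pvar_n p (\<lambda>t. X t \<omega>) a b n\<bar> \<le> R"
          then have "p * L * real n powr (1/p - 1) * (1 + 2 powr p * (pvar_n p (\<lambda>t. X t \<omega>) a b n + L powr p))
              \<le> p * L * real n powr (1/p - 1) * (1 + 2 powr p * (R + L powr p))"
            using p L by (intro mult_left_mono add_left_mono) auto
          then have "\<bar>pvar_n p (\<lambda>t. X t \<omega> + Y t \<omega>) a b n - pvar_n p (\<lambda>t. X t \<omega>) a b n\<bar> \<le> K * real n powr (1/p - 1)"
            using bnd[OF elim(2)] by (simp add: K_def algebra_simps)
          then show "\<bar>pvar_n p (\<lambda>t. X t \<omega> + Y t \<omega>) a b n - pvar_n p (\<lambda>t. X t \<omega>) a b n\<bar> \<le> e"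
            using elim(1) by (simp add: dist_real_def)
        qed
      qed
    qed
  qed
  have transfer: "weak_conv_m (\<lambda>n. distr M borel (\<lambda>\<omega>. real n powr \<alpha> *
              (pvar_n p (\<lambda>t. X t \<omega> + Y t \<omega>) a b n - lim (\<lambda>m. pvar_n p (\<lambda>t. X t \<omega>) a b m))))
            (density lborel (normal_density 0 \<sigma>))"
    if s: "\<sigma> > 0"
      and wc: "weak_conv_m (\<lambda>n. distr M borel (\<lambda>\<omega>. real n powr \<alpha> *
              (pvar_n p (\<lambda>t. X t \<omega>) a b n - lim (\<lambda>m. pvar_n p (\<lambda>t. X t \<omega>) a b m))))
            (density lborel (normal_density 0 \<sigma>))"
      and ae: "AE \<omega> in M. (\<lambda>n. real n powr \<alpha> * (pvar_n p (\<lambda>t. X t \<omega> + Y t \<omega>) a b n - pvar_n p (\<lambda>t. X t \<omega>) a b n)) \<longlonglongrightarrow> 0"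
    for p \<alpha> \<sigma> :: real
  proof (rule slutsky[OF P _ _ normal_facts[OF s] wc])
    show "(\<lambda>\<omega>. real n powr \<alpha> * (pvar_n p (\<lambda>t. X t \<omega>) a b n - lim (\<lambda>m. pvar_n p (\<lambda>t. X t \<omega>) a b m))) \<in> borel_measurable M" for n
      using mX mL by (intro borel_measurable_times borel_measurable_const borel_measurable_diff) auto
    show "(\<lambda>\<omega>. real n powr \<alpha> * (pvar_n p (\<lambda>t. X t \<omega> + Y t \<omega>) a b n - lim (\<lambda>m. pvar_n p (\<lambda>t. X t \<omega>) a b m))) \<in> borel_measurable M" for n
      using mXY mL by (intro borel_measurable_times borel_measurable_const borel_measurable_diff) auto
    show "AE \<omega> in M. (\<lambda>n. real n powr \<alpha> * (pvar_n p (\<lambda>t. X t \<omega> + Y t \<omega>) a b n - lim (\<lambda>m. pvar_n p (\<lambda>t. X t \<omega>) a b m))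
        - real n powr \<alpha> * (pvar_n p (\<lambda>t. X t \<omega>) a b n - lim (\<lambda>m. pvar_n p (\<lambda>t. X t \<omega>) a b m))) \<longlonglongrightarrow> 0"
      using ae by eventually_elim (simp add: algebra_simps)
  qed
  have part3: "\<forall>p>1. \<forall>\<alpha>>0. \<forall>\<sigma>\<^sub>0>0. \<alpha> + 1 / p < 1
        \<and> (AE \<omega> in M. convergent (\<lambda>n. pvar_n p (\<lambda>t. X t \<omega>) a b n)
                          \<and> 0 < lim (\<lambda>n. pvar_n p (\<lambda>t. X t \<omega>) a b n))
        \<and> weak_conv_m (\<lambda>n. distr M borel (\<lambda>\<omega>. real n powr \<alpha> *
              (pvar_n p (\<lambda>t. X t \<omega>) a b n - lim (\<lambda>m. pvar_n p (\<lambda>t. X t \<omega>) a b m))))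
            (density lborel (normal_density 0 \<sigma>\<^sub>0))
        \<longrightarrow> weak_conv_m (\<lambda>n. distr M borel (\<lambda>\<omega>. real n powr \<alpha> *
              (pvar_n p (\<lambda>t. X t \<omega> + Y t \<omega>) a b n - lim (\<lambda>m. pvar_n p (\<lambda>t. X t \<omega>) a b m))))
            (density lborel (normal_density 0 \<sigma>\<^sub>0))"
  proof (intro allI impI)
    fix p \<alpha> \<sigma> :: real assume p: "p > 1" and al: "\<alpha> > 0" and s: "\<sigma> > 0"
      and H: "\<alpha> + 1 / p < 1
        \<and> (AE \<omega> in M. convergent (\<lambda>n. pvar_n p (\<lambda>t. X t \<omega>) a b n)
                          \<and> 0 < lim (\<lambda>n. pvar_n p (\<lambda>t. X t \<omega>) a b n))
        \<and> weak_conv_m (\<lambda>n. distr M borel (\<lambda>\<omega>. real n powr \<alpha> *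
              (pvar_n p (\<lambda>t. X t \<omega>) a b n - lim (\<lambda>m. pvar_n p (\<lambda>t. X t \<omega>) a b m))))
            (density lborel (normal_density 0 \<sigma>))"
    show "weak_conv_m (\<lambda>n. distr M borel (\<lambda>\<omega>. real n powr \<alpha> *
              (pvar_n p (\<lambda>t. X t \<omega> + Y t \<omega>) a b n - lim (\<lambda>m. pvar_n p (\<lambda>t. X t \<omega>) a b m))))
            (density lborel (normal_density 0 \<sigma>))"
    proof (rule transfer[OF s])
      show "weak_conv_m (\<lambda>n. distr M borel (\<lambda>\<omega>. real n powr \<alpha> *
              (pvar_n p (\<lambda>t. X t \<omega>) a b n - lim (\<lambda>m. pvar_n p (\<lambda>t. X t \<omega>) a b m))))
            (density lborel (normal_density 0 \<sigma>))" by (rule conjunct2[OF conjunct2[OF H]])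
      have "AE \<omega> in M. convergent (\<lambda>n. pvar_n p (\<lambda>t. X t \<omega>) a b n)"
        using conjunct1[OF conjunct2[OF H]] by eventually_elim (rule conjunct1)
      then show "AE \<omega> in M. (\<lambda>n. real n powr \<alpha> * (pvar_n p (\<lambda>t. X t \<omega> + Y t \<omega>) a b n - pvar_n p (\<lambda>t. X t \<omega>) a b n)) \<longlonglongrightarrow> 0"
      proof (rule AE_mp, intro AE_I2 impI)
        fix \<omega> assume \<omega>: "\<omega> \<in> space M" and c: "convergent (\<lambda>n. pvar_n p (\<lambda>t. X t \<omega>) a b n)"
        obtain R where R: "\<And>n. \<bar>pvar_n p (\<lambda>t. X t \<omega>) a b n\<bar> \<le> R" using bdd[OF c] by blast
        show "(\<lambda>n. real n powr \<alpha> * (pvar_n p (\<lambda>t. X t \<omega> + Y t \<omega>) a b n - pvar_n p (\<lambda>t. X t \<omega>) a b n)) \<longlonglongrightarrow> 0"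
          by (rule rate_p[OF p assms(2) assms(6)[OF \<omega>] conjunct1[OF H] R])
      qed
    qed
  qed
  have part4: "(\<forall>\<omega>\<in>space M. C2_on a b (\<lambda>t. Y t \<omega>)) \<longrightarrow>
      (\<forall>\<sigma>\<^sub>0>0.
        (AE \<omega> in M. convergent (\<lambda>n. pvar_n 2 (\<lambda>t. X t \<omega>) a b n)
                          \<and> 0 < lim (\<lambda>n. pvar_n 2 (\<lambda>t. X t \<omega>) a b n))
        \<and> weak_conv_m (\<lambda>n. distr M borel (\<lambda>\<omega>. real n powr (1/2) *
              (pvar_n 2 (\<lambda>t. X t \<omega>) a b n - lim (\<lambda>m. pvar_n 2 (\<lambda>t. X t \<omega>) a b m))))
            (density lborel (normal_density 0 \<sigma>\<^sub>0))
        \<longrightarrow> weak_conv_m (\<lambda>n. distr M borel (\<lambda>\<omega>. real n powr (1/2) *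
              (pvar_n 2 (\<lambda>t. X t \<omega> + Y t \<omega>) a b n - lim (\<lambda>m. pvar_n 2 (\<lambda>t. X t \<omega>) a b m))))
            (density lborel (normal_density 0 \<sigma>\<^sub>0)))"
  proof (intro allI impI)
    fix \<sigma> :: real assume C2: "\<forall>\<omega>\<in>space M. C2_on a b (\<lambda>t. Y t \<omega>)" and s: "\<sigma> > 0"
      and H: "(AE \<omega> in M. convergent (\<lambda>n. pvar_n 2 (\<lambda>t. X t \<omega>) a b n)
                          \<and> 0 < lim (\<lambda>n. pvar_n 2 (\<lambda>t. X t \<omega>) a b n))
        \<and> weak_conv_m (\<lambda>n. distr M borel (\<lambda>\<omega>. real n powr (1/2) *
              (pvar_n 2 (\<lambda>t. X t \<omega>) a b n - lim (\<lambda>m. pvar_n 2 (\<lambda>t. X t \<omega>) a b m))))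
            (density lborel (normal_density 0 \<sigma>))"
    show "weak_conv_m (\<lambda>n. distr M borel (\<lambda>\<omega>. real n powr (1/2) *
              (pvar_n 2 (\<lambda>t. X t \<omega> + Y t \<omega>) a b n - lim (\<lambda>m. pvar_n 2 (\<lambda>t. X t \<omega>) a b m))))
            (density lborel (normal_density 0 \<sigma>))"
    proof (rule transfer[OF s])
      show "weak_conv_m (\<lambda>n. distr M borel (\<lambda>\<omega>. real n powr (1/2) *
              (pvar_n 2 (\<lambda>t. X t \<omega>) a b n - lim (\<lambda>m. pvar_n 2 (\<lambda>t. X t \<omega>) a b m))))
            (density lborel (normal_density 0 \<sigma>))" by (rule conjunct2[OF H])
      have "AE \<omega> in M. convergent (\<lambda>n. pvar_n 2 (\<lambda>t. X t \<omega>) a b n)"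
        using conjunct1[OF H] by eventually_elim (rule conjunct1)
      then show "AE \<omega> in M. (\<lambda>n. real n powr (1/2) * (pvar_n 2 (\<lambda>t. X t \<omega> + Y t \<omega>) a b n - pvar_n 2 (\<lambda>t. X t \<omega>) a b n)) \<longlonglongrightarrow> 0"
      proof (rule AE_mp, intro AE_I2 impI)
        fix \<omega> assume \<omega>: "\<omega> \<in> space M" and c: "convergent (\<lambda>n. pvar_n 2 (\<lambda>t. X t \<omega>) a b n)"
        obtain R where R: "\<And>n. \<bar>pvar_n 2 (\<lambda>t. X t \<omega>) a b n\<bar> \<le> R" using bdd[OF c] by blast
        show "(\<lambda>n. real n powr (1/2) * (pvar_n 2 (\<lambda>t. X t \<omega> + Y t \<omega>) a b n - pvar_n 2 (\<lambda>t. X t \<omega>) a b n)) \<longlonglongrightarrow> 0"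
          using rate_2[OF assms(2) assms(5)[OF \<omega>] C2[rule_format, OF \<omega>], of R] R by simp
      qed
    qed
  qed
  show ?thesis by (rule conjI[OF part1 conjI[OF part2 conjI[OF part3 part4]]])
qed


end
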